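(* There exists an infinite class of feasible configurations of size $n=4$ such that, for each configuration $G$ of this class, every dedicated leader election algorithm for $G$ takes time $\Omega(\sigma)$, where $\sigma$ is the span of $G$.
   Context: Model. A configuration is a finite simple undirected connected graph $G$ in which each node $v$ is tagged with a non-negative integer $t_v$ (wakeup tag); smallest tag $0$, span $\sigma$ = largest tag; size = number of nodes. Nodes are anonymous and communicate in synchronous global rounds. A node $v$ wakes up in the first global round $r\le t_v$ in which it receives a message, if any, and otherwise in global round $t_v$; its local clock is $0$ in its wakeup round, it acts from local round $1$, and nodes do not know the global clock. In each round a node transmits a message to all neighbours, listens, or terminates. A listening node receives $M$ if exactly one neighbour transmits ($M$), hears collision noise (distinct from silence and messages) if at least two neighbours transmit, and silence otherwise; a transmitting node hears nothing. A DRIP is a common function mapping a node's history (what it heard in each local round $0,\ldots,i-1$, including whether/by which message it was woken) to its action in local round $i\ge1$, with every node eventually terminating permanently; a decision function maps each node's final history to $\{0,1\}$; a dedicated leader election algorithm for $G$ is a DRIP plus decision function such that exactly one node of $G$ outputs $1$; $G$ is feasible if one exists. The time of such an algorithm is the number of rounds until the nodes terminate. *)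

theory Defs
  imports Complex_Main
begin

definition is_config :: "nat set \<Rightarrow> (nat \<Rightarrow> nat \<Rightarrow> bool) \<Rightarrow> (nat \<Rightarrow> nat) \<Rightarrow> bool" where
  "is_config V E t \<longleftrightarrow>
     finite V \<and> V \<noteq> {} \<and>
     (\<forall>x y. E x y \<longrightarrow> x \<in> V \<and> y \<in> V \<and> x \<noteq> y \<and> E y x) \<and>
     (\<forall>x\<in>V. \<forall>y\<in>V. (x, y) \<in> {(a, b). E a b}\<^sup>*) \<and>
     (\<exists>v\<in>V. t v = 0) \<and>
     (\<forall>v. v \<notin> V \<longrightarrow> t v = 0)"

definition span :: "nat set \<Rightarrow> (nat \<Rightarrow> nat) \<Rightarrow> nat" where
  "span V t = Max (t ` V)"

text \<open>What a node hears/records in a local round.  Entry 0 of a history records the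
wakeup (spontaneous, or by which message).  Sent = the node transmitted (hears nothing).\<close>
datatype 'm obs = WokeSpont | WokeBy 'm | Silence | Noise | Heard 'm | Sent

datatype 'm act = Transmit 'm | Listen | Terminate

datatype 'm nstate = Asleep | Active "'m obs list" | Done "'m obs list"

definition transmits :: "('m obs list \<Rightarrow> 'm act) \<Rightarrow> 'm nstate \<Rightarrow> 'm option" where
  "transmits A s = (case s of Active h \<Rightarrow> (case A h of Transmit m \<Rightarrow> Some m | _ \<Rightarrow> None) | _ \<Rightarrow> None)"

definition received :: "('m obs list \<Rightarrow> 'm act) \<Rightarrow> (nat \<Rightarrow> nat \<Rightarrow> bool) \<Rightarrow> (nat \<Rightarrow> 'm nstate) \<Rightarrow> nat \<Rightarrow> 'm obs" where
  "received A E S v =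
     (let T = {u. E v u \<and> transmits A (S u) \<noteq> None} in
      if T = {} then Silence
      else if card T = 1 then Heard (the (transmits A (S (the_elem T))))
      else Noise)"

text \<open>State of node v at the end of global round Suc r, given the states S at the end of round r.\<close>
definition step :: "('m obs list \<Rightarrow> 'm act) \<Rightarrow> (nat \<Rightarrow> nat \<Rightarrow> bool) \<Rightarrow> (nat \<Rightarrow> nat) \<Rightarrow> nat
                    \<Rightarrow> (nat \<Rightarrow> 'm nstate) \<Rightarrow> nat \<Rightarrow> 'm nstate" where
  "step A E t r S v =
     (case S v of
        Asleep \<Rightarrow> (case received A E S v of
                     Heard m \<Rightarrow> Active [WokeBy m]
                   | _ \<Rightarrow> (if t v = Suc r then Active [WokeSpont] else Asleep))
      | Active h \<Rightarrow> (case A h of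
                     Terminate \<Rightarrow> Done h
                   | Transmit m \<Rightarrow> Active (h @ [Sent])
                   | Listen \<Rightarrow> Active (h @ [received A E S v]))
      | Done h \<Rightarrow> Done h)"

text \<open>exec A E t r v = state of node v at the end of global round r.\<close>
primrec exec :: "('m obs list \<Rightarrow> 'm act) \<Rightarrow> (nat \<Rightarrow> nat \<Rightarrow> bool) \<Rightarrow> (nat \<Rightarrow> nat) \<Rightarrow> nat \<Rightarrow> nat \<Rightarrow> 'm nstate" where
  "exec A E t 0 = (\<lambda>v. if t v = 0 then Active [WokeSpont] else Asleep)"
| "exec A E t (Suc r) = step A E t r (exec A E t r)"

fun is_done :: "'m nstate \<Rightarrow> bool" where
  "is_done (Done h) = True"
| "is_done _ = False"

fun final_hist :: "'m nstate \<Rightarrow> 'm obs list" where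
  "final_hist (Done h) = h"
| "final_hist _ = []"

definition all_terminate :: "nat set \<Rightarrow> (nat \<Rightarrow> nat \<Rightarrow> bool) \<Rightarrow> (nat \<Rightarrow> nat) \<Rightarrow> ('m obs list \<Rightarrow> 'm act) \<Rightarrow> bool" where
  "all_terminate V E t A \<longleftrightarrow> (\<exists>r. \<forall>v\<in>V. is_done (exec A E t r v))"

definition alg_time :: "nat set \<Rightarrow> (nat \<Rightarrow> nat \<Rightarrow> bool) \<Rightarrow> (nat \<Rightarrow> nat) \<Rightarrow> ('m obs list \<Rightarrow> 'm act) \<Rightarrow> nat" where
  "alg_time V E t A = (LEAST r. \<forall>v\<in>V. is_done (exec A E t r v))"

definition leader_election :: "nat set \<Rightarrow> (nat \<Rightarrow> nat \<Rightarrow> bool) \<Rightarrow> (nat \<Rightarrow> nat)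
      \<Rightarrow> ('m obs list \<Rightarrow> 'm act) \<Rightarrow> ('m obs list \<Rightarrow> bool) \<Rightarrow> bool" where
  "leader_election V E t A d \<longleftrightarrow>
     all_terminate V E t A \<and>
     card {v \<in> V. d (final_hist (exec A E t (alg_time V E t A) v))} = 1"

text \<open>Messages are natural numbers (w.l.o.g.: histories are countable).\<close>
definition feasible :: "nat set \<Rightarrow> (nat \<Rightarrow> nat \<Rightarrow> bool) \<Rightarrow> (nat \<Rightarrow> nat) \<Rightarrow> bool" where
  "feasible V E t \<longleftrightarrow> (\<exists>(A :: nat obs list \<Rightarrow> nat act) d. leader_election V E t A d)"

end

theory Submission
  imports Defs
begin


lemma exec_agree:
  assumes "\<forall>u. u \<noteq> v \<longrightarrow> t' u = t u" "t v > T" "t' v > T"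
  shows "r \<le> T \<Longrightarrow> exec A E t r = exec A E t' r"
proof (induction r)
  case 0
  show ?case
  proof (rule ext)
    fix u show "exec A E t 0 u = exec A E t' 0 u"
      using assms by (cases "u = v") auto
  qed
next
  case (Suc r)
  have IH: "exec A E t r = exec A E t' r" using Suc by simp
  have "step A E t r S = step A E t' r S" for S
  proof (rule ext)
    fix u show "step A E t r S u = step A E t' r S u"
    proof (cases "u = v")
      case True
      then have "t u \<noteq> Suc r" "t' u \<noteq> Suc r" using assms Suc.prems by auto
      then show ?thesis unfolding step_def by (simp split: nstate.split obs.split)
    next
      case False then show ?thesis using assms unfolding step_def by simp
    qed
  qed
  then show ?case using IH by simp
qed

lemma received_sym:
  assumes inv: "\<And>u. f (f u) = u" and Ef: "\<And>x y. E (f x) (f y) = E x y"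
    and Sf: "\<And>u. S (f u) = S u"
  shows "received A E S (f v) = received A E S v"
proof -
  let ?T = "{u. E v u \<and> transmits A (S u) \<noteq> None}"
  have img: "{u. E (f v) u \<and> transmits A (S u) \<noteq> None} = f ` ?T"
  proof
    show "{u. E (f v) u \<and> transmits A (S u) \<noteq> None} \<subseteq> f ` ?T"
    proof
      fix u assume "u \<in> {u. E (f v) u \<and> transmits A (S u) \<noteq> None}"
      then have "f u \<in> ?T" using Ef[of v "f u"] Sf[of u] inv[of u] by auto
      then show "u \<in> f ` ?T" using inv[of u] by (metis image_eqI)
    qed
  next
    show "f ` ?T \<subseteq> {u. E (f v) u \<and> transmits A (S u) \<noteq> None}"
      using Ef Sf inv by auto
  qed
  have injf: "inj f" by (metis inv injI)
  have c: "card (f ` ?T) = card ?T" using injf by (simp add: card_image inj_on_subset)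
  show ?thesis
  proof (cases "card ?T = 1")
    case True
    then obtain x where x: "?T = {x}" by (auto simp: card_Suc_eq)
    then have "f ` ?T = {f x}" by simp
    then show ?thesis unfolding received_def Let_def using img x Sf[of x] by simp
  next
    case False
    then show ?thesis unfolding received_def Let_def using img c by auto
  qed
qed

lemma exec_sym:
  assumes inv: "\<And>u. f (f u) = u" and Ef: "\<And>x y. E (f x) (f y) = E x y"
    and tf: "\<And>u. t (f u) = t u"
  shows "exec A E t r (f u) = exec A E t r u"
proof (induction r arbitrary: u)
  case 0 then show ?case using tf by simp
next
  case (Suc r)
  have R: "received A E (exec A E t r) (f u) = received A E (exec A E t r) u"
    using received_sym[of f E "exec A E t r", OF inv Ef Suc.IH] by blast
  show ?case unfolding exec.simps step_def Suc.IH[of u] tf[of u] R by (rule refl)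
qed



definition pE :: "nat \<Rightarrow> nat \<Rightarrow> bool" where
  "pE x y = (x < 4 \<and> y < 4 \<and> (x = Suc y \<or> y = Suc x))"

definition sw :: "nat \<Rightarrow> nat" where
  "sw u = (if u = 0 then 3 else if u = 3 then 0 else if u = 1 then 2 else if u = 2 then 1 else u)"

lemma sw_inv: "sw (sw u) = u" by (simp add: sw_def)

lemma lt4: "(x::nat) < 4 \<longleftrightarrow> x = 0 \<or> x = 1 \<or> x = 2 \<or> x = 3" by auto

lemma sw_E: "pE (sw x) (sw y) = pE x y"
  unfolding pE_def sw_def by auto

lemma sw_ne: "x < 4 \<Longrightarrow> sw x \<noteq> x" "x < 4 \<Longrightarrow> sw x < 4"
  unfolding sw_def by auto

lemma no_le_sym:
  assumes "t 0 = t 3" "t 1 = t 2"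
  shows "\<not> leader_election {..<4} pE t A d"
proof
  assume le: "leader_election {..<4} pE t A d"
  have tf: "\<And>u. t (sw u) = t u" using assms by (simp add: sw_def)
  let ?X = "{v \<in> {..<4}. d (final_hist (exec A pE t (alg_time {..<4} pE t A) v))}"
  have "card ?X = 1" using le unfolding leader_election_def by simp
  then obtain x where x: "?X = {x}" by (auto simp: card_Suc_eq)
  then have x4: "x < 4" and dx: "d (final_hist (exec A pE t (alg_time {..<4} pE t A) x))" by auto
  have "sw x \<in> ?X" using x4 dx sw_ne(2)[OF x4] exec_sym[of sw pE t A _ x, OF sw_inv sw_E tf] by simp
  then show False using x sw_ne(1)[OF x4] by blast
qed



definition tk :: "nat \<Rightarrow> nat \<Rightarrow> nat" where
  "tk k v = (if v = 0 then 2*k+2 else if v = 3 then k+1 else 0)"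

definition Ak :: "nat \<Rightarrow> nat obs list \<Rightarrow> nat act" where
  "Ak k h = (if length h = 2*k+3 \<and> Heard 0 \<notin> set h then Transmit 0
             else if length h > 2*k+3 then Terminate else Listen)"

definition St :: "nat \<Rightarrow> nat \<Rightarrow> nat \<Rightarrow> nat nstate" where
  "St k r v =
    (if v = 1 \<or> v = 2 then
       (if r < 2*k+3 then Active (WokeSpont # replicate r Silence)
        else if r = 2*k+3 then Active (WokeSpont # replicate (2*k+2) Silence @ [Sent])
        else Done (WokeSpont # replicate (2*k+2) Silence @ [Sent]))
     else if v = 3 then
       (if r < k+1 then Asleep
        else if r < 2*k+3 then Active (WokeSpont # replicate (r-k-1) Silence)
        else if r \<le> 3*k+4 then Active (WokeSpont # replicate (k+1) Silence @ Heard 0 # replicate (r-2*k-3) Silence)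
        else Done (WokeSpont # replicate (k+1) Silence @ Heard 0 # replicate (k+1) Silence))
     else if v = 0 then
       (if r < 2*k+2 then Asleep
        else if r = 2*k+2 then Active [WokeSpont]
        else if r \<le> 4*k+5 then Active (WokeSpont # Heard 0 # replicate (r-2*k-3) Silence)
        else Done (WokeSpont # Heard 0 # replicate (2*k+2) Silence))
     else Asleep)"

lemma trans_St: "transmits (Ak k) (St k r v) = (if (v = 1 \<or> v = 2) \<and> r = 2*k+2 then Some 0 else None)"
  unfolding transmits_def St_def Ak_def
  by (auto split: nstate.split act.split)

lemma recv_cong:
  assumes "\<And>u. u < 4 \<Longrightarrow> S u = S' u"
  shows "received A pE S v = received A pE S' v"
proof -
  have "{u. pE v u \<and> transmits A (S u) \<noteq> None} = {u. pE v u \<and> transmits A (S' u) \<noteq> None}"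
    using assms by (auto simp: pE_def)
  moreover have "card {u. pE v u \<and> transmits A (S u) \<noteq> None} = 1 \<Longrightarrow>
     S (the_elem {u. pE v u \<and> transmits A (S u) \<noteq> None}) = S' (the_elem {u. pE v u \<and> transmits A (S u) \<noteq> None})"
  proof -
    assume "card {u. pE v u \<and> transmits A (S u) \<noteq> None} = 1"
    then obtain x where x: "{u. pE v u \<and> transmits A (S u) \<noteq> None} = {x}" by (auto simp: card_Suc_eq)
    then have "x < 4" by (auto simp: pE_def)
    then show ?thesis using x assms by simp
  qed
  ultimately show ?thesis unfolding received_def Let_def by simp
qed

lemma recv_St:
  assumes "v < 4"
  shows "received (Ak k) pE (St k r) v = (if r = 2*k+2 then Heard 0 else Silence)"
proof (cases "r = 2*k+2")
  case True
  have "{u. pE v u \<and> transmits (Ak k) (St k r u) \<noteq> None} = {if v = 0 \<or> v = 2 then 1 else 2}"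
    using True assms unfolding trans_St pE_def by auto
  then show ?thesis using True unfolding received_def Let_def by (simp add: trans_St)
next
  case False
  have "{u. pE v u \<and> transmits (Ak k) (St k r u) \<noteq> None} = {}"
    using False unfolding trans_St by auto
  then show ?thesis using False unfolding received_def Let_def by simp
qed

lemma rep_snoc: "replicate n x @ [x] = replicate (Suc n) x"
  by (simp add: replicate_append_same)

lemma step12:
  assumes "v = 1 \<or> v = 2"
  shows "step (Ak k) pE (tk k) r (St k r) v = St k (Suc r) v"
proof -
  have v4: "v < 4" using assms by auto
  consider "r < 2*k+2" | "r = 2*k+2" | "r = 2*k+3" | "r > 2*k+3" by linarith
  then show ?thesis
  proof cases
    case 1 then show ?thesis using assms unfolding step_def recv_St[OF v4]
      by (auto simp: St_def Ak_def tk_def rep_snoc)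
  next
    case 2 then show ?thesis using assms unfolding step_def recv_St[OF v4]
      by (auto simp: St_def Ak_def tk_def rep_snoc)
  next
    case 3 then show ?thesis using assms unfolding step_def recv_St[OF v4]
      by (auto simp: St_def Ak_def tk_def rep_snoc)
  next
    case 4 then show ?thesis using assms unfolding step_def recv_St[OF v4]
      by (auto simp: St_def Ak_def tk_def rep_snoc)
  qed
qed


lemma step3:
  shows "step (Ak k) pE (tk k) r (St k r) 3 = St k (Suc r) 3"
proof -
  have v4: "(3::nat) < 4" by auto
  consider "r < k" | "r = k" | "k < r \<and> r < 2*k+2" | "r = 2*k+2" | "2*k+2 < r \<and> r < 3*k+4" | "r = 3*k+4" | "r > 3*k+4" by linarith
  then show ?thesis
  proof cases
    case 1 then show ?thesis unfolding step_def recv_St[OF v4]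
      by (auto simp: St_def Ak_def tk_def rep_snoc)
  next
    case 2 then show ?thesis unfolding step_def recv_St[OF v4]
      by (auto simp: St_def Ak_def tk_def rep_snoc)
  next
    case 3
    define j where "j = r - (k + 1)"
    have j: "r = k + 1 + j" "j < k + 1" using 3 j_def by auto
    then show ?thesis unfolding step_def recv_St[OF v4]
      by (auto simp: St_def Ak_def tk_def rep_snoc)
  next
    case 4 then show ?thesis unfolding step_def recv_St[OF v4]
      by (auto simp: St_def Ak_def tk_def rep_snoc)
  next
    case 5
    define j where "j = r - (2*k + 3)"
    have j: "r = 2*k + 3 + j" "j < k + 1" using 5 j_def by auto
    then show ?thesis unfolding step_def recv_St[OF v4]
      by (auto simp: St_def Ak_def tk_def rep_snoc)
  next
    case 6 then show ?thesis unfolding step_def recv_St[OF v4]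
      by (auto simp: St_def Ak_def tk_def rep_snoc)
  next
    case 7 then show ?thesis unfolding step_def recv_St[OF v4]
      by (auto simp: St_def Ak_def tk_def rep_snoc)
  qed
qed


lemma step0:
  shows "step (Ak k) pE (tk k) r (St k r) 0 = St k (Suc r) 0"
proof -
  have v4: "(0::nat) < 4" by auto
  consider "r < 2*k+1" | "r = 2*k+1" | "r = 2*k+2" | "2*k+2 < r \<and> r < 4*k+5" | "r = 4*k+5" | "r > 4*k+5" by linarith
  then show ?thesis
  proof cases
    case 1 then show ?thesis unfolding step_def recv_St[OF v4]
      by (auto simp: St_def Ak_def tk_def rep_snoc)
  next
    case 2 then show ?thesis unfolding step_def recv_St[OF v4]
      by (auto simp: St_def Ak_def tk_def rep_snoc)
  next
    case 3 then show ?thesis unfolding step_def recv_St[OF v4]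
      by (auto simp: St_def Ak_def tk_def rep_snoc)
  next
    case 4
    define j where "j = r - (2*k + 3)"
    have j: "r = 2*k + 3 + j" "j < 2*k + 2" using 4 j_def by auto
    then show ?thesis unfolding step_def recv_St[OF v4]
      by (auto simp: St_def Ak_def tk_def rep_snoc)
  next
    case 5 then show ?thesis unfolding step_def recv_St[OF v4]
      by (auto simp: St_def Ak_def tk_def rep_snoc)
  next
    case 6 then show ?thesis unfolding step_def recv_St[OF v4]
      by (auto simp: St_def Ak_def tk_def rep_snoc)
  qed
qed




lemma step_cong:
  assumes "\<And>u. u < 4 \<Longrightarrow> S u = S' u" "v < 4"
  shows "step A pE t r S v = step A pE t r S' v"
proof -
  have R: "received A pE S v = received A pE S' v" by (rule recv_cong) (rule assms(1))
  have Sv: "S v = S' v" using assms by simp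
  show ?thesis unfolding step_def R Sv by (rule refl)
qed

lemma exec_St: "v < 4 \<Longrightarrow> exec (Ak k) pE (tk k) r v = St k r v"
proof (induction r arbitrary: v)
  case 0
  then show ?case unfolding lt4 by (auto simp: St_def tk_def)
next
  case (Suc r)
  have "exec (Ak k) pE (tk k) (Suc r) v = step (Ak k) pE (tk k) r (St k r) v"
    using step_cong[of "exec (Ak k) pE (tk k) r" "St k r" v, OF Suc.IH Suc.prems] by simp
  also have "\<dots> = St k (Suc r) v"
    using Suc.prems step12[of v k r] step3[of k r] step0[of k r] unfolding lt4 by auto
  finally show ?case .
qed

lemma time_k: "alg_time {..<4} pE (tk k) (Ak k) = 4*k+6"
  unfolding alg_time_def
proof (rule Least_equality)
  show "\<forall>v\<in>{..<4}. is_done (exec (Ak k) pE (tk k) (4 * k + 6) v)"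
    by (auto simp: exec_St St_def)
next
  fix r assume "\<forall>v\<in>{..<4}. is_done (exec (Ak k) pE (tk k) r v)"
  then have "is_done (exec (Ak k) pE (tk k) r 0)" by simp
  then have "is_done (St k r 0)" using exec_St[of 0 k r] by simp
  then show "4*k+6 \<le> r" by (auto simp: St_def split: if_splits)
qed


lemma feas_k: "feasible {..<4} pE (tk k)"
proof -
  define d where "d = (\<lambda>h::nat obs list. h ! (k+2) = Heard 0)"
  have at: "all_terminate {..<4} pE (tk k) (Ak k)"
    unfolding all_terminate_def
    by (rule exI[of _ "4*k+6"]) (auto simp: exec_St St_def)
  have "{v \<in> {..<4}. d (final_hist (exec (Ak k) pE (tk k) (alg_time {..<4} pE (tk k) (Ak k)) v))} = {3}"
  proof -
    have e: "{..<4::nat} = {0,1,2,3}" by auto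
    have h: "final_hist (exec (Ak k) pE (tk k) (4*k+6) v) = final_hist (St k (4*k+6) v)" if "v < 4" for v
      using exec_St[OF that] by simp
    have f0: "\<not> d (final_hist (St k (4*k+6) 0))"
    proof -
      have "final_hist (St k (4*k+6) 0) = WokeSpont # Heard 0 # replicate (2*k+2) Silence"
        by (simp add: St_def del: replicate.simps)
      moreover have "(WokeSpont # Heard 0 # replicate (2*k+2) Silence :: nat obs list) ! (k+2) = Silence"
        by (simp del: replicate.simps)
      ultimately show ?thesis by (simp add: d_def del: replicate.simps)
    qed
    have f1: "\<not> d (final_hist (St k (4*k+6) 1))"
    proof -
      have "final_hist (St k (4*k+6) 1) = WokeSpont # replicate (2*k+2) Silence @ [Sent]"
        by (simp add: St_def del: replicate.simps)
      moreover have "(WokeSpont # replicate (2*k+2) Silence @ [Sent] :: nat obs list) ! (k+2) = Silence"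
        by (simp add: nth_append del: replicate.simps)
      ultimately show ?thesis by (simp add: d_def del: replicate.simps)
    qed
    have f2: "\<not> d (final_hist (St k (4*k+6) 2))"
    proof -
      have "final_hist (St k (4*k+6) 2) = WokeSpont # replicate (2*k+2) Silence @ [Sent]"
        by (simp add: St_def del: replicate.simps)
      moreover have "(WokeSpont # replicate (2*k+2) Silence @ [Sent] :: nat obs list) ! (k+2) = Silence"
        by (simp add: nth_append del: replicate.simps)
      ultimately show ?thesis by (simp add: d_def del: replicate.simps)
    qed
    have f3: "d (final_hist (St k (4*k+6) 3))"
      by (simp add: St_def d_def nth_append)
    show ?thesis unfolding time_k unfolding e using h[of 0] h[of 1] h[of 2] h[of 3] f0 f1 f2 f3 by auto
  qed
  then have "leader_election {..<4} pE (tk k) (Ak k) d"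
    unfolding leader_election_def using at by simp
  then show ?thesis unfolding feasible_def by blast
qed


lemma span_k: "span {..<4} (tk k) = 2*k+2"
proof -
  have "{..<4::nat} = {0,1,2,3}" by auto
  then have "tk k ` {..<4} = {2*k+2, 0, k+1}" by (auto simp: tk_def)
  then show ?thesis unfolding span_def by simp
qed

lemma config_k: "is_config {..<4} pE (tk k)"
proof -
  let ?R = "{(a, b). pE a b}"
  have e: "(i, Suc i) \<in> ?R" "(Suc i, i) \<in> ?R" if "i < 3" for i
    using that by (auto simp: pE_def)
  have c0: "(0, y) \<in> ?R\<^sup>*" if "y < 4" for y
  proof -
    have a: "(0,1) \<in> ?R" "(1,2) \<in> ?R" "(2,3) \<in> ?R" by (auto simp: pE_def)
    have "(0, 1) \<in> ?R\<^sup>*" using a(1) by blast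
    moreover have "(0, 2) \<in> ?R\<^sup>*" by (rule rtrancl_into_rtrancl[OF r_into_rtrancl[OF a(1)] a(2)])
    moreover have "(0, 3) \<in> ?R\<^sup>*" by (rule rtrancl_into_rtrancl[OF rtrancl_into_rtrancl[OF r_into_rtrancl[OF a(1)] a(2)] a(3)])
    ultimately show ?thesis using that unfolding lt4 by auto
  qed
  have c1: "(y, 0) \<in> ?R\<^sup>*" if "y < 4" for y
  proof -
    have s: "?R\<inverse> = ?R" by (auto simp: pE_def)
    have "(0, y) \<in> ?R\<^sup>*" using c0 that by blast
    then have "(y, 0) \<in> (?R\<inverse>)\<^sup>*" by (simp add: rtrancl_converse)
    then show ?thesis using s by simp
  qed
  show ?thesis unfolding is_config_def
  proof (intro conjI)
    show "\<forall>x\<in>{..<4}. \<forall>y\<in>{..<4}. (x, y) \<in> ?R\<^sup>*"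
    proof (intro ballI)
      fix x y assume "x \<in> {..<4::nat}" "y \<in> {..<4::nat}"
      then show "(x, y) \<in> ?R\<^sup>*" using c0[of y] c1[of x] rtrancl_trans[of x 0 ?R y] by simp
    qed
    show "\<forall>x y. pE x y \<longrightarrow> x \<in> {..<4} \<and> y \<in> {..<4} \<and> x \<noteq> y \<and> pE y x"
      by (auto simp: pE_def)
    show "\<exists>v\<in>{..<4}. tk k v = 0" by (rule bexI[of _ 1]) (auto simp: tk_def)
    show "\<forall>v. v \<notin> {..<4} \<longrightarrow> tk k v = 0" by (auto simp: tk_def)
  qed (auto simp: lessThan_empty_iff)
qed


lemma lower_k:
  assumes le: "leader_election {..<4} pE (tk k) A d"
  shows "k + 1 \<le> alg_time {..<4} pE (tk k) A"
proof (rule ccontr)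
  let ?T = "alg_time {..<4} pE (tk k) A"
  assume "\<not> k + 1 \<le> ?T"
  then have T: "?T \<le> k" by simp
  define t' where "t' = (tk k)(0 := k+1)"
  have ag: "r \<le> ?T \<Longrightarrow> exec A pE (tk k) r = exec A pE t' r" for r
    by (rule exec_agree[of 0 t' "tk k" ?T]) (use T in \<open>auto simp: t'_def tk_def\<close>)
  have "all_terminate {..<4} pE (tk k) A" using le unfolding leader_election_def by simp
  then have PT: "\<forall>v\<in>{..<4}. is_done (exec A pE (tk k) ?T v)"
    unfolding all_terminate_def alg_time_def by (rule LeastI_ex)
  have at': "alg_time {..<4} pE t' A = ?T"
    unfolding alg_time_def[of _ _ t']
  proof (rule Least_equality)
    show "\<forall>v\<in>{..<4}. is_done (exec A pE t' ?T v)" using PT ag[of ?T] by simp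
  next
    fix r assume r: "\<forall>v\<in>{..<4}. is_done (exec A pE t' r v)"
    show "?T \<le> r"
    proof (cases "r \<le> ?T")
      case True
      then have "\<forall>v\<in>{..<4}. is_done (exec A pE (tk k) r v)" using r ag[of r] by simp
      then show ?thesis unfolding alg_time_def by (rule Least_le)
    qed simp
  qed
  have "leader_election {..<4} pE t' A d"
    using le PT ag[of ?T] at' unfolding leader_election_def all_terminate_def by auto
  moreover have "\<not> leader_election {..<4} pE t' A d"
    by (rule no_le_sym) (auto simp: t'_def tk_def)
  ultimately show False by simp
qed


theorem proposition3:
  shows "\<exists>C :: ((nat \<Rightarrow> nat \<Rightarrow> bool) \<times> (nat \<Rightarrow> nat)) set.
           infinite C \<and>
           (\<forall>(E, t) \<in> C. is_config {..<4} E t \<and> feasible {..<4} E t) \<and>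
           (\<exists>c :: real. c > 0 \<and> (\<exists>s0. \<forall>(E, t) \<in> C. span {..<4} t \<ge> s0 \<longrightarrow>
              (\<forall>(A :: nat obs list \<Rightarrow> nat act) d. leader_election {..<4} E t A d \<longrightarrow>
                 real (alg_time {..<4} E t A) \<ge> c * real (span {..<4} t))))"
proof (intro exI conjI)
  let ?C = "range (\<lambda>k. (pE, tk k))"
  have "inj (\<lambda>k. (pE, tk k))"
  proof (rule injI)
    fix a b assume "(pE, tk a) = (pE, tk b)"
    then have "tk a 0 = tk b 0" by simp
    then show "a = b" by (simp add: tk_def)
  qed
  then show "infinite ?C" using finite_imageD[of "\<lambda>k. (pE, tk k)" UNIV] infinite_UNIV_nat by blast
  show "\<forall>(E, t) \<in> ?C. is_config {..<4} E t \<and> feasible {..<4} E t"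
    using config_k feas_k by auto
  show "(1/2::real) > 0" by simp
  show "\<forall>(E, t) \<in> ?C. span {..<4} t \<ge> 0 \<longrightarrow>
              (\<forall>(A :: nat obs list \<Rightarrow> nat act) d. leader_election {..<4} E t A d \<longrightarrow>
                 real (alg_time {..<4} E t A) \<ge> (1/2) * real (span {..<4} t))"
  proof (clarify)
    fix k A d assume le: "leader_election {..<4} pE (tk k) (A :: nat obs list \<Rightarrow> nat act) d"
    have "k + 1 \<le> alg_time {..<4} pE (tk k) A" by (rule lower_k[OF le])
    then show "real (alg_time {..<4} pE (tk k) A) \<ge> (1/2) * real (span {..<4} (tk k))"
      unfolding span_k by simp
  qed
qed

end
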